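(* Let $L=E[C_1,\dots,C_n]$ be a congruence normal lattice. If $L$ is shellable, then for every $i\in[n]$ the convex subset $C_i$ intersects the spine of $E[C_1,\dots,C_{i-1}]$.
   Context: All lattices are finite. For a convex subset $C$ of a lattice $L$ (convex: $x,y\in C\Rightarrow[x,y]\subseteq C$), let $I_L(C)=\{y\in L\mid\exists x\in C,\ y\le x\}$, and the doubling $L[C]$ is the subposet of $L\times\{0<1\}$ on $\big(I_L(C)\times\{0\}\big)\sqcup\big(((L\setminus I_L(C))\cup C)\times\{1\}\big)$. $E[\,]$ is the one-element lattice and $E[C_1,\dots,C_{i+1}]:=E[C_1,\dots,C_i][C_{i+1}]$ with $C_{i+1}$ a nonempty convex subset of $E[C_1,\dots,C_i]$. The spine of a poset is the set of elements lying on some chain of maximum length. The order complex $\Delta(L)$ is the simplicial complex on $L$ whose faces are the chains of $L$; its facets are the maximal chains. $L$ is shellable if $\Delta(L)$ is shellable, i.e. its facets admit a linear order $F_1,\dots,F_k$ such that for each $1\le j<k$, the complex $\big(\bigcup_{i\le j}\langle F_i\rangle\big)\cap\langle F_{j+1}\rangle$ is pure of dimension $|F_{j+1}|-2$, where $\langle F\rangle$ is the set of all subsets of $F$. *)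

theory Defs
  imports Main
begin

text \<open>Every lattice E[C_1,...,C_n] is (by construction) a subposet of
the n-fold product of the two-element chain {0<1}. We represent its elements as
boolean lists of length n (the i-th entry is the coordinate added by the i-th
doubling; False = 0, True = 1), ordered componentwise. A finite poset is then
just a finite set of boolean lists with this order.\<close>

definition bleq :: "bool list \<Rightarrow> bool list \<Rightarrow> bool" where
  "bleq x y \<longleftrightarrow> list_all2 (\<lambda>a b. a \<longrightarrow> b) x y"

definition convex_in :: "bool list set \<Rightarrow> bool list set \<Rightarrow> bool" where
  "convex_in L C \<longleftrightarrow> C \<subseteq> L \<and>
     (\<forall>x\<in>C. \<forall>y\<in>C. \<forall>z\<in>L. bleq x z \<and> bleq z y \<longrightarrow> z \<in> C)"

definition downset :: "bool list set \<Rightarrow> bool list set \<Rightarrow> bool list set" where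
  "downset L C = {y \<in> L. \<exists>x\<in>C. bleq y x}"

text \<open>Doubling L[C] as a subposet of L \<times> {0<1}; the pair (x,b) is encoded as x @ [b].\<close>
definition double :: "bool list set \<Rightarrow> bool list set \<Rightarrow> bool list set" where
  "double L C = (\<lambda>x. x @ [False]) ` downset L C
              \<union> (\<lambda>x. x @ [True]) ` ((L - downset L C) \<union> C)"

definition Eseq :: "bool list set list \<Rightarrow> bool list set" where
  "Eseq Cs = foldl double {[]} Cs"

definition valid_doubling_seq :: "bool list set list \<Rightarrow> bool" where
  "valid_doubling_seq Cs \<longleftrightarrow>
     (\<forall>i < length Cs. Cs ! i \<noteq> {} \<and> convex_in (Eseq (take i Cs)) (Cs ! i))"

definition is_chain :: "bool list set \<Rightarrow> bool list set \<Rightarrow> bool" where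
  "is_chain L S \<longleftrightarrow> S \<subseteq> L \<and> (\<forall>x\<in>S. \<forall>y\<in>S. bleq x y \<or> bleq y x)"

definition max_chain_card :: "bool list set \<Rightarrow> nat" where
  "max_chain_card L = Max (card ` {S. is_chain L S})"

definition spine :: "bool list set \<Rightarrow> bool list set" where
  "spine L = {x \<in> L. \<exists>S. is_chain L S \<and> x \<in> S \<and> card S = max_chain_card L}"

definition order_complex :: "bool list set \<Rightarrow> bool list set set" where
  "order_complex L = {S. is_chain L S}"

definition facets :: "'a set set \<Rightarrow> 'a set set" where
  "facets K = {F \<in> K. \<forall>G\<in>K. F \<subseteq> G \<longrightarrow> G = F}"

definition pure_of_dim :: "'a set set \<Rightarrow> int \<Rightarrow> bool" where
  "pure_of_dim K d \<longleftrightarrow> (\<forall>F \<in> facets K. int (card F) = d + 1)"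

text \<open>Shellability: a linear order F_1..F_k of the facets (list index i = F_{i+1}) such that
for each 1 \<le> j < k, (\<Union>_{i\<le>j} <F_i>) \<inter> <F_{j+1}> is pure of dimension |F_{j+1}|-2.\<close>
definition shellable_complex :: "'a set set \<Rightarrow> bool" where
  "shellable_complex K \<longleftrightarrow> (\<exists>Fs. distinct Fs \<and> set Fs = facets K \<and>
     (\<forall>j. 1 \<le> j \<and> j < length Fs \<longrightarrow>
        pure_of_dim ((\<Union>i<j. Pow (Fs ! i)) \<inter> Pow (Fs ! j)) (int (card (Fs ! j)) - 2)))"

definition shellable :: "bool list set \<Rightarrow> bool" where
  "shellable L \<longleftrightarrow> shellable_complex (order_complex L)"

end

theory Submission
  imports Defs
begin

lemma bleq_len: "bleq x y \<Longrightarrow> length x = length y"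
  by (simp add: bleq_def list_all2_lengthD)

lemma bleq_refl: "bleq x x"
  by (simp add: bleq_def list_all2_refl)

lemma bleq_trans: "bleq x y \<Longrightarrow> bleq y z \<Longrightarrow> bleq x z"
  unfolding bleq_def by (rule list_all2_trans) auto

lemma bleq_antisym: "bleq x y \<Longrightarrow> bleq y x \<Longrightarrow> x = y"
  unfolding bleq_def
  by (auto simp: list_all2_conv_all_nth intro!: nth_equalityI)

lemma bleq_snoc: "length x = length y \<Longrightarrow> bleq (x @ [a]) (y @ [b]) \<longleftrightarrow> bleq x y \<and> (a \<longrightarrow> b)"
  unfolding bleq_def by (simp add: list_all2_append)

lemma fin_min:
  assumes "finite T" "T \<noteq> {}"
    and tr: "\<And>x y z. R x y \<Longrightarrow> R y z \<Longrightarrow> R x z"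
    and an: "\<And>x y. R x y \<Longrightarrow> R y x \<Longrightarrow> x = y"
  shows "\<exists>c\<in>T. \<forall>x\<in>T. R x c \<longrightarrow> x = c"
  using assms(1,2)
proof (induction T rule: finite_ne_induct)
  case (singleton x)
  then show ?case by auto
next
  case (insert a T)
  then obtain c where c: "c \<in> T" "\<forall>x\<in>T. R x c \<longrightarrow> x = c" by auto
  show ?case
  proof (cases "R a c \<and> a \<noteq> c")
    case True
    have "\<forall>x\<in>insert a T. R x a \<longrightarrow> x = a"
    proof (intro ballI impI)
      fix x assume "x \<in> insert a T" "R x a"
      show "x = a"
      proof (cases "x = a")
        case False
        then have "x \<in> T" using \<open>x \<in> insert a T\<close> by auto
        have "R x c" using tr[OF \<open>R x a\<close>] True by auto
        then have "x = c" using c \<open>x \<in> T\<close> by auto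
        then show ?thesis using an[of a c] True \<open>R x a\<close> by auto
      qed
    qed
    then show ?thesis by auto
  next
    case False
    then show ?thesis using c by auto
  qed
qed

section \<open>Chains and facets\<close>

lemma facet_iff: "F \<in> facets (order_complex L) \<longleftrightarrow>
   is_chain L F \<and> (\<forall>G. is_chain L G \<and> F \<subseteq> G \<longrightarrow> G = F)"
  unfolding facets_def order_complex_def by auto

lemma extend_chain:
  assumes "finite L" "is_chain L S"
  shows "\<exists>F. F \<in> facets (order_complex L) \<and> S \<subseteq> F"
proof -
  let ?X = "{G. is_chain L G \<and> S \<subseteq> G}"
  have fX: "finite ?X" using assms(1)
    by (rule finite_subset[rotated, OF finite_Pow_iff[THEN iffD2]]) (auto simp: is_chain_def)
  have "S \<in> ?X" using assms by auto
  then have ne: "card ` ?X \<noteq> {}" by auto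
  have "Max (card ` ?X) \<in> card ` ?X" using fX ne by (intro Max_in) auto
  then obtain F where F: "F \<in> ?X" "card F = Max (card ` ?X)" by auto
  have "\<forall>G. is_chain L G \<and> F \<subseteq> G \<longrightarrow> G = F"
  proof (intro allI impI)
    fix G assume G: "is_chain L G \<and> F \<subseteq> G"
    then have "G \<in> ?X" using F by auto
    then have "card G \<le> card F" using F fX by auto
    moreover have "finite G" using G assms(1) finite_subset unfolding is_chain_def by blast
    ultimately show "G = F" using G card_subset_eq by (metis antisym card_mono)
  qed
  then show ?thesis using F facet_iff by blast
qed


section \<open>Single doubling\<close>

lemma double_mem: "z \<in> double L C \<longleftrightarrow>
   (\<exists>x. z = x @ [False] \<and> x \<in> downset L C) \<or> (\<exists>x. z = x @ [True] \<and> x \<in> (L - downset L C) \<union> C)"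
  unfolding double_def by auto

lemma snoc_False_mem: "x @ [False] \<in> double L C \<longleftrightarrow> x \<in> downset L C"
  unfolding double_def by auto

lemma snoc_True_mem: "x @ [True] \<in> double L C \<longleftrightarrow> x \<in> (L - downset L C) \<union> C"
  unfolding double_def by auto

lemma downset_mem: "x \<in> downset L C \<longleftrightarrow> x \<in> L \<and> (\<exists>c\<in>C. bleq x c)"
  unfolding downset_def by auto

lemma double_elem:
  assumes "z \<in> double L C" "convex_in L C"
  shows "butlast z \<in> L \<and> z = butlast z @ [last z]"
  using assms unfolding double_def downset_def convex_in_def by auto

lemma double_len:
  assumes "\<forall>x\<in>L. length x = k" "convex_in L C" "z \<in> double L C"
  shows "length z = Suc k"
  using assms double_elem by (metis length_append_singleton)

lemma chain_butlast:
  assumes U: "\<forall>x\<in>L. length x = k" and cv: "convex_in L C"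
    and ch: "is_chain (double L C) F"
  shows "is_chain L (butlast ` F)"
proof -
  have "butlast ` F \<subseteq> L" using ch double_elem[OF _ cv] unfolding is_chain_def by auto
  moreover have "bleq x y \<or> bleq y x" if xy: "x \<in> butlast ` F" "y \<in> butlast ` F" for x y
  proof -
    obtain f where f1: "f \<in> F" "x = butlast f" using xy(1) by blast
    obtain g where g1: "g \<in> F" "y = butlast g" using xy(2) by blast
    note fg = f1(1) g1(1) f1(2) g1(2)
    have ff: "f = x @ [last f]" "x \<in> L" using double_elem[OF _ cv] ch fg unfolding is_chain_def by auto
    have gg: "g = y @ [last g]" "y \<in> L" using double_elem[OF _ cv] ch fg unfolding is_chain_def by auto
    have "length x = length y" using U ff gg by auto
    moreover have "bleq f g \<or> bleq g f" using ch fg unfolding is_chain_def by auto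
    ultimately show ?thesis using ff gg bleq_snoc by metis
  qed
  ultimately show ?thesis unfolding is_chain_def by auto
qed

lemma facet_butlast:
  assumes U: "\<forall>x\<in>L. length x = k" and cv: "convex_in L C"
    and F: "F \<in> facets (order_complex (double L C))"
  shows "butlast ` F \<in> facets (order_complex L)"
proof -
  let ?D = "downset L C"
  have chF: "is_chain (double L C) F" and maxF: "\<And>G. is_chain (double L C) G \<Longrightarrow> F \<subseteq> G \<Longrightarrow> G = F"
    using F facet_iff by blast+
  have chG: "is_chain L (butlast ` F)" using chain_butlast[OF U cv chF] .
  have FD: "\<And>f. f \<in> F \<Longrightarrow> butlast f \<in> L \<and> f = butlast f @ [last f]"
    using chF double_elem[OF _ cv] unfolding is_chain_def by auto
  have CL: "C \<subseteq> L" using cv unfolding convex_in_def by auto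
  have maxG: "\<forall>H. is_chain L H \<and> butlast ` F \<subseteq> H \<longrightarrow> H = butlast ` F"
  proof (intro allI impI)
  fix H assume H0: "is_chain L H \<and> butlast ` F \<subseteq> H"
  then have H: "is_chain L H" "butlast ` F \<subseteq> H" by auto
  show "H = butlast ` F"
  proof (rule ccontr)
    assume "H \<noteq> butlast ` F"
    then obtain z where z: "z \<in> H" "z \<notin> butlast ` F" using H by auto
    have zL: "z \<in> L" using z H unfolding is_chain_def by auto
    define bt where "bt = (z \<notin> ?D \<or> (z \<in> C \<and> (\<exists>x. x @ [True] \<in> F \<and> bleq x z)))"
    define w where "w = z @ [bt]"
    have wmem: "w \<in> double L C"
    proof (cases bt)
      case True
      then have "z \<in> (L - ?D) \<union> C" using zL bt_def by auto
      then show ?thesis unfolding w_def using True snoc_True_mem by auto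
    next
      case False
      then have "z \<in> ?D" using bt_def by auto
      then show ?thesis unfolding w_def using False snoc_False_mem by auto
    qed
    have comp: "bleq f w \<or> bleq w f" if f: "f \<in> F" for f
    proof -
      define x a where "x = butlast f" and "a = last f"
      have fx: "f = x @ [a]" "x \<in> L" using FD[OF f] x_def a_def by auto
      have len: "length x = length z" using U fx zL by auto
      have "x \<in> H" using H(2) f x_def by blast
      then have xz: "bleq x z \<or> bleq z x" using H(1) z(1) unfolding is_chain_def by blast
      show ?thesis
      proof (cases "bleq x z")
        case True
        have "a \<longrightarrow> bt"
        proof
          assume a: a
          show bt
          proof (rule ccontr)
            assume nb: "\<not> bt"
            then have zD: "z \<in> ?D" using bt_def by auto
            have "x @ [True] \<in> F" using fx f a by auto
            then have "x \<in> (L - ?D) \<union> C" using chF snoc_True_mem unfolding is_chain_def by blast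
            moreover have "x \<in> ?D" using zD True fx bleq_trans unfolding downset_mem by blast
            ultimately have xC: "x \<in> C" by auto
            obtain c where c: "c \<in> C" "bleq z c" using zD downset_mem by auto
            have "z \<in> C" using cv xC c True zL unfolding convex_in_def by blast
            then have bt using \<open>x @ [True] \<in> F\<close> True bt_def by auto
            then show False using nb by auto
          qed
        qed
        then have "bleq f w" using True fx len bleq_snoc w_def by auto
        then show ?thesis by auto
      next
        case False
        then have zx: "bleq z x" using xz by auto
        have "bt \<longrightarrow> a"
        proof
          assume b: bt
          show a
          proof (rule ccontr)
            assume na: "\<not> a"
            have "x @ [False] \<in> F" using fx f na by auto
            then have xD: "x \<in> ?D" using chF snoc_False_mem unfolding is_chain_def by blast
            then have zD: "z \<in> ?D" using zx zL bleq_trans unfolding downset_mem by blast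
            then obtain x' where x': "x' @ [True] \<in> F" "bleq x' z" using b bt_def by auto
            have "x' \<in> L" using FD[OF x'(1)] by auto
            then have len2: "length x' = length x" using U fx by auto
            have "bleq (x' @ [True]) (x @ [False]) \<or> bleq (x @ [False]) (x' @ [True])"
              using chF x'(1) \<open>x @ [False] \<in> F\<close> unfolding is_chain_def by auto
            then have "bleq x x'" using bleq_snoc len2 by auto
            then have "bleq x z" using x'(2) bleq_trans by blast
            then show False using False by auto
          qed
        qed
        then have "bleq w f" using zx fx len bleq_snoc w_def by auto
        then show ?thesis by auto
      qed
    qed
    have "is_chain (double L C) (insert w F)"
      using chF wmem comp bleq_refl unfolding is_chain_def by auto
    then have "insert w F = F" using maxF by auto
    then have "w \<in> F" by auto
    then have "z \<in> butlast ` F" unfolding w_def by (metis butlast_snoc image_eqI)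
    then show False using z by auto
  qed
  qed
  show ?thesis by (rule facet_iff[THEN iffD2], rule conjI[OF chG maxG])
qed


lemma pair_lemma:
  assumes U: "\<forall>x\<in>L. length x = k" and cv: "convex_in L C" and fL: "finite L"
    and F: "F \<in> facets (order_complex (double L C))"
    and c: "c \<in> C" "c @ [b] \<in> F"
  shows "\<exists>x\<in>C. x @ [False] \<in> F \<and> x @ [True] \<in> F"
proof -
  let ?D = "downset L C"
  have chF: "is_chain (double L C) F" and maxF: "\<And>G. is_chain (double L C) G \<Longrightarrow> F \<subseteq> G \<Longrightarrow> G = F"
    using F facet_iff by blast+
  have FD: "\<And>f. f \<in> F \<Longrightarrow> butlast f \<in> L \<and> f = butlast f @ [last f]"
    using chF double_elem[OF _ cv] unfolding is_chain_def by auto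
  have CL: "C \<subseteq> L" using cv unfolding convex_in_def by auto
  have CD: "C \<subseteq> ?D" using CL bleq_refl by (auto simp: downset_def)
  have lenC: "\<And>x. x \<in> C \<Longrightarrow> length x = k" using CL U by auto
  have ins: "w \<in> F" if "w \<in> double L C" "\<And>f. f \<in> F \<Longrightarrow> bleq f w \<or> bleq w f" for w
  proof -
    have "is_chain (double L C) (insert w F)"
      using chF that bleq_refl unfolding is_chain_def by auto
    then have "insert w F = F" using maxF by auto
    then show ?thesis by auto
  qed
  let ?T = "{x\<in>C. x @ [True] \<in> F}"
  let ?S = "{x\<in>C. x @ [False] \<in> F}"
  have fT: "finite ?T" by (rule finite_subset[OF _ fL]) (use CL in auto)
  have fS: "finite ?S" by (rule finite_subset[OF _ fL]) (use CL in auto)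
  show ?thesis
  proof (cases "?T = {}")
    case False
    obtain c0 where c0: "c0 \<in> ?T" "\<forall>x\<in>?T. bleq x c0 \<longrightarrow> x = c0"
      using fin_min[OF fT False, of bleq] bleq_trans bleq_antisym by blast
    have "c0 @ [False] \<in> F"
    proof (rule ins)
      show "c0 @ [False] \<in> double L C" using c0 CD snoc_False_mem by blast
      fix f assume f: "f \<in> F"
      define x a where "x = butlast f" and "a = last f"
      have fx: "f = x @ [a]" "x \<in> L" using FD[OF f] x_def a_def by auto
      have len: "length x = length c0" using U fx c0 lenC by auto
      have "bleq f (c0 @ [True]) \<or> bleq (c0 @ [True]) f" using chF f c0 unfolding is_chain_def by auto
      then show "bleq f (c0 @ [False]) \<or> bleq (c0 @ [False]) f"
      proof
        assume "bleq f (c0 @ [True])"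
        then have xc: "bleq x c0" using fx len bleq_snoc by auto
        show ?thesis
        proof (cases a)
          case False
          then show ?thesis using xc fx len bleq_snoc by auto
        next
          case True
          then have "x @ [True] \<in> double L C" using chF f fx unfolding is_chain_def by auto
          then have "x \<in> (L - ?D) \<union> C" by (simp only: snoc_True_mem)
          moreover have "x \<in> ?D" unfolding downset_mem using fx(2) xc c0 by blast
          ultimately have "x \<in> ?T" using f fx True by auto
          then have "x = c0" using c0 xc by auto
          then show ?thesis using fx len bleq_snoc bleq_refl by auto
        qed
      next
        assume "bleq (c0 @ [True]) f"
        then have "bleq c0 x" "a" using fx len bleq_snoc by auto
        then show ?thesis using fx len bleq_snoc by auto
      qed
    qed
    then show ?thesis using c0 by auto
  next
    case True
    then have "c \<in> ?S" using c by (cases b) auto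
    then have Sne: "?S \<noteq> {}" by auto
    obtain c0 where c0: "c0 \<in> ?S" "\<forall>x\<in>?S. bleq c0 x \<longrightarrow> x = c0"
      using fin_min[OF fS Sne, of "\<lambda>x y. bleq y x"] bleq_trans bleq_antisym by blast
    have "c0 @ [True] \<in> F"
    proof (rule ins)
      show "c0 @ [True] \<in> double L C" using c0 snoc_True_mem by blast
      fix f assume f: "f \<in> F"
      define x a where "x = butlast f" and "a = last f"
      have fx: "f = x @ [a]" "x \<in> L" using FD[OF f] x_def a_def by auto
      have len: "length x = length c0" using U fx c0 lenC by auto
      have "bleq f (c0 @ [False]) \<or> bleq (c0 @ [False]) f" using chF f c0 unfolding is_chain_def by auto
      then show "bleq f (c0 @ [True]) \<or> bleq (c0 @ [True]) f"
      proof
        assume "bleq f (c0 @ [False])"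
        then show ?thesis using fx len bleq_snoc by auto
      next
        assume "bleq (c0 @ [False]) f"
        then have xc: "bleq c0 x" using fx len bleq_snoc by auto
        show ?thesis
        proof (cases a)
          case True
          then show ?thesis using xc fx len bleq_snoc by auto
        next
          case False
          then have "x @ [False] \<in> double L C" using chF f fx unfolding is_chain_def by auto
          then have "x \<in> ?D" by (simp only: snoc_False_mem)
          then obtain c' where c': "c' \<in> C" "bleq x c'" unfolding downset_mem by auto
          have c0C: "c0 \<in> C" using c0 by simp
          have "x \<in> C" using cv c0C c'(1) xc c'(2) fx(2) unfolding convex_in_def by blast
          then have "x \<in> ?S" using f fx False by auto
          then have "x = c0" using c0 xc by auto
          then show ?thesis using fx len bleq_snoc bleq_refl by auto
        qed
      qed
    qed
    then show ?thesis using c0 by auto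
  qed
qed



definition lift :: "bool list set \<Rightarrow> bool list set \<Rightarrow> bool list \<Rightarrow> bool list" where
  "lift L C x = (if x \<in> downset L C then x @ [False] else x @ [True])"

lemma lift_chain:
  assumes U: "\<forall>x\<in>L. length x = k" and ch: "is_chain L M"
  shows "is_chain (double L C) (lift L C ` M) \<and> butlast ` lift L C ` M = M"
proof -
  have MsubL: "M \<subseteq> L" using ch unfolding is_chain_def by auto
  have mem: "lift L C x \<in> double L C" if "x \<in> M" for x
    using that MsubL unfolding lift_def double_def by auto
  have comp: "bleq (lift L C x) (lift L C y)" if "x \<in> M" "y \<in> M" "bleq x y" for x y
  proof -
    have "x \<in> L" "y \<in> L" using that MsubL by auto
    then have len: "length x = length y" using U by simp
    have yx: "x \<notin> downset L C \<Longrightarrow> y \<notin> downset L C"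
      using that MsubL bleq_trans unfolding downset_mem by blast
    show ?thesis
    proof (cases "x \<in> downset L C")
      case True
      then show ?thesis
        by (cases "y \<in> downset L C") (simp_all add: lift_def bleq_snoc[OF len] that(3))
    next
      case False
      then show ?thesis using yx by (simp add: lift_def bleq_snoc[OF len] that(3))
    qed
  qed
  have "is_chain (double L C) (lift L C ` M)"
    unfolding is_chain_def
  proof (intro conjI ballI)
    show "lift L C ` M \<subseteq> double L C" using mem by blast
    fix u v assume "u \<in> lift L C ` M" "v \<in> lift L C ` M"
    then obtain x y where "x \<in> M" "y \<in> M" "u = lift L C x" "v = lift L C y" by blast
    moreover have "bleq x y \<or> bleq y x" using ch \<open>x \<in> M\<close> \<open>y \<in> M\<close> unfolding is_chain_def by blast
    ultimately show "bleq u v \<or> bleq v u" using comp by blast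
  qed
  moreover have bl: "\<And>x. butlast (lift L C x) = x" by (simp add: lift_def)
  have "butlast ` lift L C ` M = M" by (simp add: image_image bl)
  ultimately show ?thesis by auto
qed


section \<open>The tower of doublings\<close>

lemma Eseq_Suc: "k < length Cs \<Longrightarrow> Eseq (take (Suc k) Cs) = double (Eseq (take k Cs)) (Cs ! k)"
  by (simp add: Eseq_def take_Suc_conv_app_nth)

lemma valid_convex: "valid_doubling_seq Cs \<Longrightarrow> k < length Cs \<Longrightarrow>
   convex_in (Eseq (take k Cs)) (Cs ! k) \<and> Cs ! k \<noteq> {}"
  unfolding valid_doubling_seq_def by auto

lemma Eseq_len: "valid_doubling_seq Cs \<Longrightarrow> k \<le> length Cs \<Longrightarrow> \<forall>x\<in>Eseq (take k Cs). length x = k"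
proof (induction k)
  case 0
  then show ?case by (simp add: Eseq_def)
next
  case (Suc k)
  then have "k < length Cs" by auto
  then show ?case using Suc double_len[of "Eseq (take k Cs)" k "Cs ! k"] valid_convex[of Cs k]
    by (simp add: Eseq_Suc)
qed

lemma Eseq_fin: "valid_doubling_seq Cs \<Longrightarrow> k \<le> length Cs \<Longrightarrow> finite (Eseq (take k Cs))"
  by (rule finite_subset[OF _ finite_lists_length_eq[OF finite_UNIV, of k]]) (use Eseq_len in auto)

lemma take_id_img: "\<forall>x\<in>F. length x = k \<Longrightarrow> take k ` F = F"
  by (simp add: image_cong_simp[THEN trans])

lemma take_butlast_img: "\<forall>x\<in>F. length x = Suc j \<Longrightarrow> k \<le> j \<Longrightarrow> take k ` butlast ` F = take k ` F"
  unfolding image_image by (rule image_cong) (auto simp: butlast_conv_take min_def)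

lemma facet_sub: "F \<in> facets (order_complex L) \<Longrightarrow> F \<subseteq> L"
  unfolding facet_iff is_chain_def by auto

lemma facet_take:
  assumes V: "valid_doubling_seq Cs"
  shows "k \<le> j \<Longrightarrow> j \<le> length Cs \<Longrightarrow> F \<in> facets (order_complex (Eseq (take j Cs)))
     \<Longrightarrow> take k ` F \<in> facets (order_complex (Eseq (take k Cs)))"
proof (induction j arbitrary: F)
  case 0
  then have "take k ` F = F" using Eseq_len[OF V, of 0] facet_sub[OF "0.prems"(3)]
    by (intro take_id_img) auto
  then show ?case using 0 by auto
next
  case (Suc j)
  show ?case
  proof (cases "k = Suc j")
    case True
    then have "take k ` F = F" using Eseq_len[OF V, of "Suc j"] facet_sub[OF Suc.prems(3)] Suc.prems
      by (intro take_id_img) auto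
    then show ?thesis using Suc True by auto
  next
    case False
    then have kj: "k \<le> j" "j < length Cs" using Suc.prems by auto
    have cv: "convex_in (Eseq (take j Cs)) (Cs ! j)" using valid_convex[OF V kj(2)] by auto
    have U: "\<forall>x\<in>Eseq (take j Cs). length x = j" using Eseq_len[OF V] kj by auto
    have "F \<in> facets (order_complex (double (Eseq (take j Cs)) (Cs ! j)))"
      using Suc.prems(3) Eseq_Suc[OF kj(2)] by simp
    then have "butlast ` F \<in> facets (order_complex (Eseq (take j Cs)))"
      using facet_butlast[OF U cv] by blast
    then have "take k ` butlast ` F \<in> facets (order_complex (Eseq (take k Cs)))"
      using Suc.IH kj by auto
    moreover have "take k ` butlast ` F = take k ` F"
      using Eseq_len[OF V, of "Suc j"] facet_sub[OF Suc.prems(3)] Suc.prems kj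
      by (intro take_butlast_img) auto
    ultimately show ?thesis by simp
  qed
qed

lemma facet_lift:
  assumes V: "valid_doubling_seq Cs"
  shows "k \<le> j \<Longrightarrow> j \<le> length Cs \<Longrightarrow> M \<in> facets (order_complex (Eseq (take k Cs)))
     \<Longrightarrow> \<exists>F. F \<in> facets (order_complex (Eseq (take j Cs))) \<and> take k ` F = M"
proof (induction j)
  case 0
  then have "take k ` M = M" using Eseq_len[OF V, of 0] facet_sub[OF "0.prems"(3)]
    by (intro take_id_img) auto
  then show ?case using 0 by auto
next
  case (Suc j)
  show ?case
  proof (cases "k = Suc j")
    case True
    then have "take k ` M = M" using Eseq_len[OF V, of "Suc j"] facet_sub[OF Suc.prems(3)] Suc.prems
      by (intro take_id_img) auto
    then show ?thesis using Suc True by auto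
  next
    case False
    then have kj: "k \<le> j" "j < length Cs" using Suc.prems by auto
    let ?L = "Eseq (take j Cs)"
    have cv: "convex_in ?L (Cs ! j)" using valid_convex[OF V kj(2)] by auto
    have U: "\<forall>x\<in>?L. length x = j" using Eseq_len[OF V] kj by auto
    obtain F where F: "F \<in> facets (order_complex ?L)" "take k ` F = M" using Suc kj by auto
    have chF: "is_chain ?L F" using F facet_iff by blast
    have lc: "is_chain (double ?L (Cs ! j)) (lift ?L (Cs ! j) ` F)"
      "butlast ` lift ?L (Cs ! j) ` F = F"
      using lift_chain[OF U chF] by auto
    have fin: "finite (double ?L (Cs ! j))" using Eseq_fin[OF V, of "Suc j"] kj Eseq_Suc[OF kj(2)] by simp
    obtain F' where F': "F' \<in> facets (order_complex (double ?L (Cs ! j)))" "lift ?L (Cs ! j) ` F \<subseteq> F'"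
      using extend_chain[OF fin lc(1)] by blast
    have bF: "butlast ` F' \<in> facets (order_complex ?L)" using facet_butlast[OF U cv F'(1)] .
    have "F \<subseteq> butlast ` F'" using F'(2) lc(2) by (metis image_mono)
    then have "butlast ` F' = F" using F(1) bF unfolding facet_iff by blast
    moreover have F'E: "F' \<in> facets (order_complex (Eseq (take (Suc j) Cs)))"
      using F'(1) Eseq_Suc[OF kj(2)] by simp
    moreover have "take k ` butlast ` F' = take k ` F'"
      using Eseq_len[OF V, of "Suc j"] facet_sub[OF F'E] Suc.prems kj
      by (intro take_butlast_img) auto
    ultimately show ?thesis using F(2) by metis
  qed
qed


section \<open>Shelling step\<close>

lemma shell_step:
  assumes fin: "finite P" and Fs: "set Fs = facets (order_complex P)"
    and pure: "pure_of_dim ((\<Union>i<j. Pow (Fs ! i)) \<inter> Pow (Fs ! j)) (int (card (Fs ! j)) - 2)"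
    and j: "1 \<le> j" "j < length Fs"
  shows "\<exists>l<j. \<exists>y. Fs ! j - {y} \<subseteq> Fs ! l"
proof -
  let ?K = "(\<Union>i<j. Pow (Fs ! i)) \<inter> Pow (Fs ! j)"
  have "Fs ! j \<in> facets (order_complex P)" using Fs j nth_mem by blast
  then have fFj: "finite (Fs ! j)" using facet_sub fin finite_subset by blast
  have fK: "finite ?K" using fFj by (rule finite_subset[rotated, OF finite_Pow_iff[THEN iffD2]]) auto
  have "{} \<in> ?K"
  proof -
    have "(0::nat) < j" using j by simp
    then show ?thesis by blast
  qed
  then have ne: "card ` ?K \<noteq> {}" by auto
  have "Max (card ` ?K) \<in> card ` ?K" using fK ne by (intro Max_in) auto
  then obtain H where H': "Max (card ` ?K) = card H" "H \<in> ?K" by (rule imageE)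
  then have H: "H \<in> ?K" "card H = Max (card ` ?K)" by auto
  have "H \<in> facets ?K"
    unfolding facets_def
  proof (intro CollectI conjI ballI impI)
    show "H \<in> ?K" by fact
    fix G assume G: "G \<in> ?K" "H \<subseteq> G"
    then have "card G \<le> card H" using H fK by auto
    moreover have "finite G" using G fFj finite_subset by blast
    ultimately show "G = H" using G card_subset_eq by (metis antisym card_mono)
  qed
  then have "int (card H) = int (card (Fs ! j)) - 2 + 1" using pure unfolding pure_of_dim_def by blast
  then have cH: "card (Fs ! j) = card H + 1" by linarith
  have HF: "H \<subseteq> Fs ! j" using H by auto
  have "card (Fs ! j - H) = 1" using card_Diff_subset[OF finite_subset[OF HF fFj] HF] cH by simp
  then obtain y where y: "Fs ! j - H = {y}" by (rule card_1_singletonE)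
  then have "Fs ! j - {y} \<subseteq> H" by blast
  moreover obtain l where "l < j" "H \<subseteq> Fs ! l" using H by auto
  ultimately show ?thesis by blast
qed

theorem theorem3p24:
  fixes Cs :: "bool list set list"
  assumes "valid_doubling_seq Cs"
    and "shellable (Eseq Cs)"
  shows "\<forall>i < length Cs. Cs ! i \<inter> spine (Eseq (take i Cs)) \<noteq> {}"
proof (intro allI impI)
  note V = assms(1)
  fix i assume i: "i < length Cs"
  define N where "N = length Cs"
  define P where "P = Eseq Cs"
  define Q where "Q = Eseq (take i Cs)"
  define C where "C = Cs ! i"
  define m where "m = max_chain_card Q"
  have PN: "P = Eseq (take N Cs)" unfolding P_def N_def by simp
  have fP: "finite P" using Eseq_fin[OF V, of N] PN N_def by simp
  have fQ: "finite Q" using Eseq_fin[OF V, of i] i Q_def by simp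
  have UQ: "\<forall>x\<in>Q. length x = i" using Eseq_len[OF V, of i] i Q_def by simp
  have UP: "\<forall>x\<in>P. length x = N" using Eseq_len[OF V, of N] PN N_def by simp
  have cv: "convex_in Q C" and Cne: "C \<noteq> {}" using valid_convex[OF V i] Q_def C_def by auto
  have CQ: "C \<subseteq> Q" using cv unfolding convex_in_def by auto
  have Q1: "Eseq (take (Suc i) Cs) = double Q C" using Eseq_Suc[OF i] Q_def C_def by simp
  show "Cs ! i \<inter> spine (Eseq (take i Cs)) \<noteq> {}"
  proof
    assume disj0: "Cs ! i \<inter> spine (Eseq (take i Cs)) = {}"
    then have disj: "C \<inter> spine Q = {}" using C_def Q_def by simp
    have fch: "finite (card ` {S. is_chain Q S})"
      using fQ by (intro finite_imageI, rule finite_subset[rotated, OF finite_Pow_iff[THEN iffD2]])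
        (auto simp: is_chain_def)
    have chain_le: "card S \<le> m" if "is_chain Q S" for S
      unfolding m_def max_chain_card_def using fch that by (intro Max_ge) auto
    have "{} \<in> {S. is_chain Q S}" by (simp add: is_chain_def)
    then have "m \<in> card ` {S. is_chain Q S}"
      unfolding m_def max_chain_card_def using fch by (intro Max_in) auto
    then obtain N0 where N0: "is_chain Q N0" "card N0 = m" by auto
    have spine_sub: "S \<subseteq> spine Q" if "is_chain Q S" "card S = m" for S
      using that unfolding spine_def m_def is_chain_def by auto
    have projF: "take i ` F \<in> facets (order_complex Q)" if "F \<in> facets (order_complex P)" for F
      using facet_take[OF V, of i N F] that i PN Q_def N_def by simp
    have liftF: "\<exists>F. F \<in> facets (order_complex P) \<and> take i ` F = M"
      if "M \<in> facets (order_complex Q)" for M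
      using facet_lift[OF V, of i N M] that i PN Q_def N_def by simp
    have finQ: "finite S" if "S \<subseteq> Q" for S using that fQ finite_subset by blast
    define inS where "inS F \<longleftrightarrow> card (take i ` F) = m" for F :: "bool list set"
    define inA where "inA F \<longleftrightarrow> take i ` F \<inter> C \<noteq> {}" for F :: "bool list set"
    obtain FS where FS: "FS \<in> facets (order_complex P)" "inS FS"
    proof -
      obtain M0 where M0: "M0 \<in> facets (order_complex Q)" "N0 \<subseteq> M0" using extend_chain[OF fQ N0(1)] by blast
      have "card N0 \<le> card M0" using M0 facet_sub finQ by (intro card_mono) auto
      moreover have "card M0 \<le> m" using M0 facet_iff chain_le by blast
      ultimately have "card M0 = m" using N0 by auto
      then show ?thesis using liftF[OF M0(1)] that inS_def by auto
    qed
    obtain FA where FA: "FA \<in> facets (order_complex P)" "inA FA"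
    proof -
      obtain c where c: "c \<in> C" using Cne by auto
      have "is_chain Q {c}" using c CQ bleq_refl unfolding is_chain_def by auto
      then obtain M0 where M0: "M0 \<in> facets (order_complex Q)" "{c} \<subseteq> M0" using extend_chain[OF fQ] by blast
      then show ?thesis using liftF[OF M0(1)] that inA_def c by auto
    qed
    have A_pair: "\<exists>u\<in>F. \<exists>v\<in>F. u \<noteq> v \<and> take i u = take i v \<and> take i u \<in> C"
      if F: "F \<in> facets (order_complex P)" "inA F" for F
    proof -
      have G: "take (Suc i) ` F \<in> facets (order_complex (double Q C))"
        using facet_take[OF V, of "Suc i" N F] F i PN N_def Q1 by simp
      obtain f where f: "f \<in> F" "take i f \<in> C" using F(2) inA_def by auto
      have lf: "length f = N" using UP f F(1) facet_sub by blast
      have "take (Suc i) f = take i f @ [f ! i]" using lf i N_def by (simp add: take_Suc_conv_app_nth)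
      then have "take i f @ [f ! i] \<in> take (Suc i) ` F" using f by (metis image_eqI)
      then obtain x where x: "x \<in> C" "x @ [False] \<in> take (Suc i) ` F" "x @ [True] \<in> take (Suc i) ` F"
        using pair_lemma[OF UQ cv fQ G f(2)] by blast
      obtain u where u: "u \<in> F" "take (Suc i) u = x @ [False]" using x(2) by auto
      obtain v where v: "v \<in> F" "take (Suc i) v = x @ [True]" using x(3) by auto
      have lx: "length x = i" using UQ x CQ by auto
      have "take i u = take i (take (Suc i) u)" by simp
      also have "\<dots> = x" using u(2) lx by simp
      finally have tu: "take i u = x" .
      have "take i v = take i (take (Suc i) v)" by simp
      also have "\<dots> = x" using v(2) lx by simp
      finally have tv: "take i v = x" .
      have uv: "u \<noteq> v" using u(2) v(2) by (metis last_snoc)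
      show ?thesis
        apply (rule bexI[OF _ u(1)])
        apply (rule bexI[OF _ v(1)])
        using uv tu tv x(1) by simp
    qed
    have clA: "inA G" if hyp: "F \<in> facets (order_complex P)" "G \<in> facets (order_complex P)"
      "F - {y} \<subseteq> G" "inA F" for F G y
    proof -
      obtain u v where uv: "u \<in> F" "v \<in> F" "u \<noteq> v" "take i u = take i v" "take i u \<in> C"
        using A_pair[OF hyp(1,4)] by blast
      have "u \<in> G \<or> v \<in> G" using uv hyp(3) by blast
      then show ?thesis using uv inA_def by auto
    qed
    have clS: "inS G" if hyp: "F \<in> facets (order_complex P)" "G \<in> facets (order_complex P)"
      "F - {y} \<subseteq> G" "inS F" for F G y
    proof -
      have pF: "take i ` F \<in> facets (order_complex Q)" using projF hyp(1) .
      have pG: "take i ` G \<in> facets (order_complex Q)" using projF hyp(2) .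
      have cF: "card (take i ` F) = m" using hyp(4) inS_def by auto
      have fpF: "finite (take i ` F)" using pF facet_sub finQ by blast
      have fpG: "finite (take i ` G)" using pG facet_sub finQ by blast
      show ?thesis
      proof (cases "y \<notin> F \<or> take i y \<in> take i ` G")
        case True
        have "take i ` F \<subseteq> take i ` G"
        proof
          fix p assume "p \<in> take i ` F"
          then obtain f where "f \<in> F" "p = take i f" by auto
          then show "p \<in> take i ` G" using True hyp(3) by (cases "f = y") auto
        qed
        then have "take i ` G = take i ` F" using pF pG unfolding facet_iff by blast
        then show ?thesis using cF inS_def by simp
      next
        case False
        then have yF: "y \<in> F" and pn: "take i y \<notin> take i ` G" by auto
        have sub: "take i ` F - {take i y} \<subseteq> take i ` G" using hyp(3) by blast
        have "\<not> take i ` G \<subseteq> take i ` F"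
        proof
          assume "take i ` G \<subseteq> take i ` F"
          then have "take i ` F = take i ` G" using pF pG unfolding facet_iff by blast
          then show False using yF pn by auto
        qed
        then obtain z where z: "z \<in> take i ` G" "z \<notin> take i ` F" by auto
        have "insert z (take i ` F - {take i y}) \<subseteq> take i ` G" using sub z by auto
        then have "card (insert z (take i ` F - {take i y})) \<le> card (take i ` G)"
          using fpG by (intro card_mono) auto
        moreover have "card (insert z (take i ` F - {take i y})) = m"
        proof -
          have "take i ` F \<noteq> {}" using yF by auto
          then have "card (take i ` F) > 0" using fpF by (simp add: card_gt_0_iff)
          then show ?thesis using z(2) fpF cF yF by (simp add: card_insert_if)
        qed
        moreover have "card (take i ` G) \<le> m" using pG facet_iff chain_le by blast
        ultimately show ?thesis using inS_def by auto
      qed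
    qed
    obtain Fs where Fs: "distinct Fs" "set Fs = facets (order_complex P)"
      and sh: "\<forall>j. 1 \<le> j \<and> j < length Fs \<longrightarrow>
        pure_of_dim ((\<Union>i<j. Pow (Fs ! i)) \<inter> Pow (Fs ! j)) (int (card (Fs ! j)) - 2)"
      using assms(2) unfolding shellable_def shellable_complex_def P_def by blast
    have claim: "j < length Fs \<longrightarrow> (inS (Fs ! j) \<longrightarrow> inS (Fs ! 0)) \<and> (inA (Fs ! j) \<longrightarrow> inA (Fs ! 0))" for j
    proof (induction j rule: less_induct)
      case (less j)
      show ?case
      proof (intro impI)
        assume jl: "j < length Fs"
        show "(inS (Fs ! j) \<longrightarrow> inS (Fs ! 0)) \<and> (inA (Fs ! j) \<longrightarrow> inA (Fs ! 0))"
        proof (cases "j = 0")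
          case True
          then show ?thesis by simp
        next
          case False
          then obtain l y where l: "l < j" "Fs ! j - {y} \<subseteq> Fs ! l"
            using shell_step[OF fP Fs(2) sh[rule_format, of j]] jl by auto
          have fj: "Fs ! j \<in> facets (order_complex P)" using Fs(2) jl nth_mem by blast
          have fl: "Fs ! l \<in> facets (order_complex P)" using Fs(2) jl l nth_mem by (metis less_trans)
          have "inS (Fs ! j) \<longrightarrow> inS (Fs ! l)" using clS[OF fj fl l(2)] by blast
          moreover have "inA (Fs ! j) \<longrightarrow> inA (Fs ! l)" using clA[OF fj fl l(2)] by blast
          moreover have "(inS (Fs ! l) \<longrightarrow> inS (Fs ! 0)) \<and> (inA (Fs ! l) \<longrightarrow> inA (Fs ! 0))"
            using less.IH[OF l(1)] jl l by auto
          ultimately show ?thesis by blast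
        qed
      qed
    qed
    obtain jS where jS: "jS < length Fs" "Fs ! jS = FS" using FS(1) Fs(2) by (metis in_set_conv_nth)
    obtain jA where jA: "jA < length Fs" "Fs ! jA = FA" using FA(1) Fs(2) by (metis in_set_conv_nth)
    have S0: "inS (Fs ! 0)" using claim[of jS] jS FS by auto
    have A0: "inA (Fs ! 0)" using claim[of jA] jA FA by auto
    have "Fs ! 0 \<in> facets (order_complex P)" using Fs(2) jS nth_mem by (metis gr_zeroI not_less0)
    then have "take i ` (Fs ! 0) \<in> facets (order_complex Q)" using projF by blast
    then have "is_chain Q (take i ` (Fs ! 0))" using facet_iff by blast
    then have "take i ` (Fs ! 0) \<subseteq> spine Q" using spine_sub S0 inS_def by blast
    then show False using A0 disj inA_def by blast
  qed
qed

end
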